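(* Let $\mathcal{B}\subseteq\mathcal{C}^n$ be $f$-closed for all $f\in\mathbb{R}^n\setminus\mathbb{Z}^n$, and let $L\in\mathcal{C}^n$ be a polyhedron given by $L=\operatorname{conv}(V)+\operatorname{cone}(W)$, where $V$ is a nonempty finite subset of $\mathbb{R}^n$ and $W$ is a finite (possibly empty) subset of $\mathbb{R}^n\setminus\{0\}$. Then \[\frac{1}{|V|+|W|+1}\sup_{f\in\mathbb{R}^n\setminus\mathbb{Z}^n}\inf_{B\in\mathcal{B}}\rho_f(B,L)\le\rho(\mathcal{B},L)\le\sup_{f\in\mathbb{R}^n\setminus\mathbb{Z}^n}\inf_{B\in\mathcal{B}}\rho_f(B,L).\]
   Context: $\mathcal{C}^n$ is the family of all $n$-dimensional closed convex subsets of $\mathbb{R}^n$. For $B\in\mathcal{C}^n$ with $0\in\operatorname{int}(B)$, $\psi_B(r)=\inf\{\lambda>0:r\in\lambda B\}$. For $k\in\mathbb{N}$, $R=(r_1,\dots,r_k)\in\mathbb{R}^{n\times k}$, $f\in\mathbb{R}^n\setminus\mathbb{Z}^n$, $B\in\mathcal{C}^n$: if $f\in\operatorname{int}(B)$, $C_B(R,f)=\{s\in\mathbb{R}^k_{\ge0}:\sum_j s_j\psi_{B-f}(r_j)\ge1\}$, otherwise $C_B(R,f)=\mathbb{R}^k_{\ge0}$; $C_{\mathcal{B}}(R,f)=\bigcap_{B\in\mathcal{B}}C_B(R,f)$ ($=\mathbb{R}^k_{\ge0}$ if $\mathcal{B}=\emptyset$). $\rho_f(B,L)=\inf\{\alpha>0:C_B(R,f)\subseteq\frac1\alpha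 C_L(R,f)$ for all $k$, $R\}$; $\rho_f(\mathcal{B},L)=\inf\{\alpha>0:C_{\mathcal{B}}(R,f)\subseteq\frac1\alpha C_L(R,f)$ for all $k$, $R\}$; $\rho(\mathcal{B},L)=\sup_{f\in\mathbb{R}^n\setminus\mathbb{Z}^n}\rho_f(\mathcal{B},L)$. $\mathcal{B}_f$ denotes the sets of $\mathcal{B}$ containing $f$ in the interior, $\mathcal{C}^n_f$ likewise. $\mathcal{B}$ is $f$-closed if whenever $B_t\in\mathcal{B}_f$, $C\in\mathcal{C}^n_f$ and $\psi_{B_t-f}\to\psi_{C-f}$ pointwise, then $C\in\mathcal{B}_f$. *)

theory Defs
  imports "HOL-Analysis.Analysis"
begin

definition int_points :: "(real^'n) set" where
  "int_points = {x. \<forall>i. x $ i \<in> \<int>}"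

definition convex_bodies :: "(real^'n) set set" where
  "convex_bodies = {C. closed C \<and> convex C \<and> aff_dim C = int DIM(real^'n)}"

definition gauge_fn :: "(real^'n) set \<Rightarrow> real^'n \<Rightarrow> real" where
  "gauge_fn B r = Inf {l. l > 0 \<and> r \<in> (\<lambda>x. l *\<^sub>R x) ` B}"

definition transl :: "(real^'n) set \<Rightarrow> real^'n \<Rightarrow> (real^'n) set" where
  "transl B f = (\<lambda>x. x - f) ` B"

text \<open>R^k_{\<ge>0}, vectors s represented as nat \<Rightarrow> real with support in {..<k}.\<close>
definition nonneg_orthant :: "nat \<Rightarrow> (nat \<Rightarrow> real) set" where
  "nonneg_orthant k = {s. (\<forall>j<k. 0 \<le> s j) \<and> (\<forall>j\<ge>k. s j = 0)}"

text \<open>C_B(R,f), with R = (r_0,...,r_{k-1}) given as a function nat \<Rightarrow> real^'n.\<close>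
definition CB :: "(real^'n) set \<Rightarrow> nat \<Rightarrow> (nat \<Rightarrow> real^'n) \<Rightarrow> real^'n \<Rightarrow> (nat \<Rightarrow> real) set" where
  "CB B k R f = (if f \<in> interior B
     then {s \<in> nonneg_orthant k. (\<Sum>j<k. s j * gauge_fn (transl B f) (R j)) \<ge> 1}
     else nonneg_orthant k)"

text \<open>C_{\<B>}(R,f) (equal to R^k_{\<ge>0} if the family is empty).\<close>
definition CBfam :: "(real^'n) set set \<Rightarrow> nat \<Rightarrow> (nat \<Rightarrow> real^'n) \<Rightarrow> real^'n \<Rightarrow> (nat \<Rightarrow> real) set" where
  "CBfam \<B> k R f = nonneg_orthant k \<inter> (\<Inter>B\<in>\<B>. CB B k R f)"

definition scale_set :: "real \<Rightarrow> (nat \<Rightarrow> real) set \<Rightarrow> (nat \<Rightarrow> real) set" where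
  "scale_set c C = (\<lambda>s j. c * s j) ` C"

definition rho_f :: "real^'n \<Rightarrow> (real^'n) set \<Rightarrow> (real^'n) set \<Rightarrow> ereal" where
  "rho_f f B L = Inf {ereal \<alpha> | \<alpha>. \<alpha> > 0 \<and>
     (\<forall>k R. k \<ge> 1 \<longrightarrow> CB B k R f \<subseteq> scale_set (1 / \<alpha>) (CB L k R f))}"

definition rho_f_fam :: "real^'n \<Rightarrow> (real^'n) set set \<Rightarrow> (real^'n) set \<Rightarrow> ereal" where
  "rho_f_fam f \<B> L = Inf {ereal \<alpha> | \<alpha>. \<alpha> > 0 \<and>
     (\<forall>k R. k \<ge> 1 \<longrightarrow> CBfam \<B> k R f \<subseteq> scale_set (1 / \<alpha>) (CB L k R f))}"

definition rho_fam :: "(real^'n) set set \<Rightarrow> (real^'n) set \<Rightarrow> ereal" where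
  "rho_fam \<B> L = (SUP f \<in> - int_points. rho_f_fam f \<B> L)"

definition f_closed :: "real^'n \<Rightarrow> (real^'n) set set \<Rightarrow> bool" where
  "f_closed f \<B> \<longleftrightarrow>
     (\<forall>(Bs :: nat \<Rightarrow> (real^'n) set) C.
        (\<forall>t. Bs t \<in> \<B> \<and> f \<in> interior (Bs t)) \<longrightarrow>
        C \<in> convex_bodies \<longrightarrow> f \<in> interior C \<longrightarrow>
        (\<forall>r. (\<lambda>t. gauge_fn (transl (Bs t) f) r) \<longlonglongrightarrow> gauge_fn (transl C f) r) \<longrightarrow>
        C \<in> \<B> \<and> f \<in> interior C)"

text \<open>cone(W): nonnegative combinations of the finite set W (= {0} if W is empty).\<close>
definition finite_cone :: "(real^'n) set \<Rightarrow> (real^'n) set" where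
  "finite_cone W = {\<Sum>w\<in>W. \<mu> w *\<^sub>R w | \<mu>. \<forall>w\<in>W. \<mu> w \<ge> 0}"

end

theory Submission
  imports Defs "HOL-Complex_Analysis.Great_Picard"
begin


lemma gauge_set_ne:
  fixes S :: "(real^'n) set"
  assumes "0 \<in> interior S"
  shows "\<exists>l>0. r \<in> (\<lambda>x. l *\<^sub>R x) ` S"
proof -
  obtain e where e: "e > 0" "ball 0 e \<subseteq> S" using assms mem_interior by blast
  define l where "l = norm r / e + 1"
  have l: "l > 0" using e by (simp add: l_def add_nonneg_pos)
  have "norm r < e * l" using e by (simp add: l_def field_simps)
  hence "norm (r /\<^sub>R l) < e" using l e by (simp add: field_simps)
  hence "r /\<^sub>R l \<in> S" using e by auto
  moreover have "r = l *\<^sub>R (r /\<^sub>R l)" using l by simp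
  ultimately show ?thesis using l by blast
qed

lemma gauge_nonneg:
  fixes S :: "(real^'n) set"
  assumes "0 \<in> interior S"
  shows "0 \<le> gauge_fn S r"
  unfolding gauge_fn_def
  by (rule cInf_greatest) (use gauge_set_ne[OF assms, of r] in auto)

lemma gauge_le:
  fixes S :: "(real^'n) set"
  assumes "l > 0" "r \<in> (\<lambda>x. l *\<^sub>R x) ` S"
  shows "gauge_fn S r \<le> l"
  unfolding gauge_fn_def
  by (rule cInf_lower) (use assms in \<open>auto intro!: bdd_belowI[where m=0]\<close>)

lemma gauge_lt:
  fixes S :: "(real^'n) set"
  assumes "convex S" "0 \<in> interior S" "gauge_fn S r < l"
  shows "r \<in> (\<lambda>x. l *\<^sub>R x) ` S"
proof -
  have ne: "{l. l > 0 \<and> r \<in> (\<lambda>x. l *\<^sub>R x) ` S} \<noteq> {}" using gauge_set_ne[OF assms(2), of r] by auto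
  obtain x where x: "x > 0" "r \<in> (\<lambda>z. x *\<^sub>R z) ` S" "x < l"
    using cInf_lessD[OF ne assms(3)[unfolded gauge_fn_def]] by auto
  obtain y where y: "y \<in> S" "r = x *\<^sub>R y" using x by auto
  have l: "l > 0" using x by simp
  have 0: "0 \<in> S" using assms(2) interior_subset by blast
  have "(x / l) *\<^sub>R y + (1 - x / l) *\<^sub>R 0 \<in> S"
    using convexD[OF assms(1) y(1) 0, of "x/l" "1 - x/l"] x l by simp
  hence "(x / l) *\<^sub>R y \<in> S" by simp
  moreover have "r = l *\<^sub>R ((x / l) *\<^sub>R y)" using y l by simp
  ultimately show ?thesis by blast
qed

lemma gauge_zero:
  fixes S :: "(real^'n) set"
  assumes "0 \<in> interior S"
  shows "gauge_fn S 0 = 0"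
proof -
  have 0: "0 \<in> S" using assms interior_subset by blast
  have "gauge_fn S 0 \<le> 0 + e" if "e > 0" for e
    using gauge_le[of e 0 S] 0 that by (simp add: image_iff)
  hence "gauge_fn S 0 \<le> 0" by (rule field_le_epsilon)
  thus ?thesis using gauge_nonneg[OF assms] by (meson antisym)
qed

lemma gauge_scale_le:
  fixes S :: "(real^'n) set"
  assumes "convex S" "0 \<in> interior S" "c \<ge> 0"
  shows "gauge_fn S (c *\<^sub>R r) \<le> c * gauge_fn S r"
proof (cases "c = 0")
  case True thus ?thesis using gauge_zero[OF assms(2)] by simp
next
  case False
  hence c: "c > 0" using assms by simp
  have "gauge_fn S (c *\<^sub>R r) \<le> c * gauge_fn S r + e" if e: "e > 0" for e
  proof -
    define l where "l = gauge_fn S r + e / c"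
    have "gauge_fn S r < l" using e c by (simp add: l_def)
    then obtain y where y: "y \<in> S" "r = l *\<^sub>R y" using gauge_lt[OF assms(1,2)] by blast
    have l: "l > 0" using gauge_nonneg[OF assms(2), of r] e c by (simp add: l_def add_nonneg_pos)
    have "c *\<^sub>R r \<in> (\<lambda>x. (c * l) *\<^sub>R x) ` S" using y by (intro image_eqI[of _ _ y]) auto
    hence "gauge_fn S (c *\<^sub>R r) \<le> c * l" using gauge_le[of "c*l"] c l by simp
    also have "c * l = c * gauge_fn S r + e" using c by (simp add: l_def field_simps)
    finally show ?thesis .
  qed
  thus ?thesis by (rule field_le_epsilon)
qed

lemma gauge_scale:
  fixes S :: "(real^'n) set"
  assumes "convex S" "0 \<in> interior S" "c \<ge> 0"
  shows "gauge_fn S (c *\<^sub>R r) = c * gauge_fn S r"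
proof (cases "c = 0")
  case True thus ?thesis using gauge_zero[OF assms(2)] by simp
next
  case False
  hence c: "c > 0" using assms by simp
  have "gauge_fn S ((1/c) *\<^sub>R (c *\<^sub>R r)) \<le> (1/c) * gauge_fn S (c *\<^sub>R r)"
    by (rule gauge_scale_le[OF assms(1,2)]) (use c in simp)
  hence "c * gauge_fn S r \<le> gauge_fn S (c *\<^sub>R r)" using c by (simp add: field_simps)
  thus ?thesis using gauge_scale_le[OF assms, of r] by simp
qed

lemma gauge_add:
  fixes S :: "(real^'n) set"
  assumes "convex S" "0 \<in> interior S"
  shows "gauge_fn S (x + y) \<le> gauge_fn S x + gauge_fn S y"
proof -
  have "gauge_fn S (x + y) \<le> gauge_fn S x + gauge_fn S y + e" if e: "e > 0" for e
  proof -
    define a where "a = gauge_fn S x + e/2"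
    define b where "b = gauge_fn S y + e/2"
    have a: "a > 0" "gauge_fn S x < a" using gauge_nonneg[OF assms(2), of x] e by (auto simp: a_def)
    have b: "b > 0" "gauge_fn S y < b" using gauge_nonneg[OF assms(2), of y] e by (auto simp: b_def)
    obtain x' where x': "x' \<in> S" "x = a *\<^sub>R x'" using gauge_lt[OF assms a(2)] by blast
    obtain y' where y': "y' \<in> S" "y = b *\<^sub>R y'" using gauge_lt[OF assms b(2)] by blast
    have "(a/(a+b)) *\<^sub>R x' + (b/(a+b)) *\<^sub>R y' \<in> S"
      using convexD[OF assms(1) x'(1) y'(1), of "a/(a+b)" "b/(a+b)"] a b by (simp add: add_divide_distrib[symmetric])
    moreover have "x + y = (a+b) *\<^sub>R ((a/(a+b)) *\<^sub>R x' + (b/(a+b)) *\<^sub>R y')"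
      using a b x' y' by (simp add: scaleR_add_right)
    ultimately have "gauge_fn S (x + y) \<le> a + b" using gauge_le[of "a+b" "x+y" S] a b by auto
    thus ?thesis by (simp add: a_def b_def)
  qed
  thus ?thesis by (rule field_le_epsilon)
qed

lemma gauge_sum:
  fixes S :: "(real^'n) set"
  assumes "convex S" "0 \<in> interior S" "finite I" "\<And>i. i \<in> I \<Longrightarrow> c i \<ge> 0"
  shows "gauge_fn S (\<Sum>i\<in>I. c i *\<^sub>R x i) \<le> (\<Sum>i\<in>I. c i * gauge_fn S (x i))"
  using assms(3,4)
proof (induction I rule: finite_induct)
  case empty thus ?case using gauge_zero[OF assms(2)] by simp
next
  case (insert j I)
  have "gauge_fn S (\<Sum>i\<in>insert j I. c i *\<^sub>R x i) = gauge_fn S (c j *\<^sub>R x j + (\<Sum>i\<in>I. c i *\<^sub>R x i))"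
    using insert by simp
  also have "\<dots> \<le> gauge_fn S (c j *\<^sub>R x j) + gauge_fn S (\<Sum>i\<in>I. c i *\<^sub>R x i)"
    by (rule gauge_add[OF assms(1,2)])
  also have "\<dots> \<le> c j * gauge_fn S (x j) + (\<Sum>i\<in>I. c i * gauge_fn S (x i))"
    using gauge_scale_le[OF assms(1,2), of "c j" "x j"] insert by (intro add_mono) auto
  also have "\<dots> = (\<Sum>i\<in>insert j I. c i * gauge_fn S (x i))" using insert by simp
  finally show ?case .
qed



lemma transl_props:
  fixes B :: "(real^'n) set"
  assumes "convex B" "f \<in> interior B"
  shows "convex (transl B f)" "0 \<in> interior (transl B f)"
proof -
  show "convex (transl B f)" unfolding transl_def using convex_translation[OF assms(1), of "-f"]
    by (simp cong: image_cong_simp)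
  show "0 \<in> interior (transl B f)" unfolding transl_def interior_translation_subtract
    using assms(2) by (intro image_eqI[of _ _ f]) auto
qed

lemma L_rep:
  fixes L V W :: "(real^'n) set"
  assumes "finite V" "finite W" "L = {v + w | v w. v \<in> convex hull V \<and> w \<in> finite_cone W}"
    and "u \<in> L"
  shows "\<exists>lam \<mu>. (\<forall>v\<in>V. 0 \<le> lam v) \<and> sum lam V = 1 \<and> (\<forall>w\<in>W. 0 \<le> \<mu> w) \<and>
     u - f = (\<Sum>v\<in>V. lam v *\<^sub>R (v - f)) + (\<Sum>w\<in>W. \<mu> w *\<^sub>R w)"
proof -
  obtain a c where ac: "u = a + c" "a \<in> convex hull V" "c \<in> finite_cone W" using assms(3,4) by auto
  obtain lam where l: "\<forall>v\<in>V. 0 \<le> lam v" "sum lam V = 1" "(\<Sum>v\<in>V. lam v *\<^sub>R v) = a"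
    using ac(2) convex_hull_finite[OF assms(1)] by auto
  obtain \<mu> where m: "\<forall>w\<in>W. 0 \<le> \<mu> w" "c = (\<Sum>w\<in>W. \<mu> w *\<^sub>R w)"
    using ac(3) unfolding finite_cone_def by auto
  have "(\<Sum>v\<in>V. lam v *\<^sub>R (v - f)) = a - f"
    using l by (simp add: scaleR_diff_right sum_subtractf scaleR_sum_left[symmetric])
  hence "u - f = (\<Sum>v\<in>V. lam v *\<^sub>R (v - f)) + (\<Sum>w\<in>W. \<mu> w *\<^sub>R w)" using ac m by simp
  thus ?thesis using l m by blast
qed

lemma gauge_L_bound:
  fixes L V W :: "(real^'n) set"
  assumes "finite V" "finite W" "L = {v + w | v w. v \<in> convex hull V \<and> w \<in> finite_cone W}"
    and "u \<in> L"
  shows "\<exists>K\<ge>0. \<forall>S a b. convex S \<and> 0 \<in> interior S \<and> (\<forall>v\<in>V. gauge_fn S (v - f) \<le> a)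
      \<and> (\<forall>w\<in>W. gauge_fn S w \<le> b) \<and> b \<ge> 0 \<longrightarrow> gauge_fn S (u - f) \<le> a + b * K"
proof -
  obtain lam \<mu> where lm: "\<forall>v\<in>V. 0 \<le> lam v" "sum lam V = 1" "\<forall>w\<in>W. 0 \<le> \<mu> w"
     "u - f = (\<Sum>v\<in>V. lam v *\<^sub>R (v - f)) + (\<Sum>w\<in>W. \<mu> w *\<^sub>R w)"
    using L_rep[OF assms, of f] by blast
  have K: "sum \<mu> W \<ge> 0" using lm(3) by (simp add: sum_nonneg)
  show ?thesis
  proof (intro exI[of _ "sum \<mu> W"] conjI K allI impI)
    fix S and a b :: real
    assume H: "convex S \<and> 0 \<in> interior S \<and> (\<forall>v\<in>V. gauge_fn S (v - f) \<le> a)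
      \<and> (\<forall>w\<in>W. gauge_fn S w \<le> b) \<and> b \<ge> 0"
    hence cS: "convex S" "0 \<in> interior S" by auto
    have "gauge_fn S (u - f) \<le> gauge_fn S (\<Sum>v\<in>V. lam v *\<^sub>R (v - f)) + gauge_fn S (\<Sum>w\<in>W. \<mu> w *\<^sub>R w)"
      unfolding lm(4) by (rule gauge_add[OF cS])
    also have "\<dots> \<le> (\<Sum>v\<in>V. lam v * gauge_fn S (v - f)) + (\<Sum>w\<in>W. \<mu> w * gauge_fn S w)"
      by (intro add_mono gauge_sum[OF cS] assms) (use lm in auto)
    also have "\<dots> \<le> (\<Sum>v\<in>V. lam v * a) + (\<Sum>w\<in>W. \<mu> w * b)"
      using H lm by (intro add_mono sum_mono mult_left_mono) auto
    also have "\<dots> = a + b * sum \<mu> W"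
      using lm(2) by (simp add: sum_distrib_right[symmetric] sum_distrib_left[symmetric] mult.commute)
    finally show "gauge_fn S (u - f) \<le> a + b * sum \<mu> W" .
  qed
qed

lemma cone_add:
  fixes W :: "(real^'n) set"
  assumes "finite W" "c \<in> finite_cone W" "w \<in> W" "t \<ge> 0"
  shows "c + t *\<^sub>R w \<in> finite_cone W"
proof -
  obtain \<mu> where m: "\<forall>w\<in>W. 0 \<le> \<mu> w" "c = (\<Sum>w\<in>W. \<mu> w *\<^sub>R w)"
    using assms(2) unfolding finite_cone_def by auto
  define \<mu>' where "\<mu>' = (\<lambda>x. \<mu> x + (if x = w then t else 0))"
  have "(\<Sum>x\<in>W. \<mu>' x *\<^sub>R x) = c + t *\<^sub>R w"
  proof -
    have "(\<Sum>x\<in>W. \<mu>' x *\<^sub>R x) = (\<Sum>x\<in>W. \<mu> x *\<^sub>R x) + (\<Sum>x\<in>W. (if x = w then t else 0) *\<^sub>R x)"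
      by (simp add: \<mu>'_def scaleR_add_left sum.distrib)
    also have "(\<Sum>x\<in>W. (if x = w then t else 0) *\<^sub>R x) = (\<Sum>x\<in>W. (if x = w then t *\<^sub>R w else 0))"
      by (rule sum.cong) auto
    also have "\<dots> = t *\<^sub>R w" using assms(1,3) by simp
    finally show ?thesis using m(2) by simp
  qed
  moreover have "\<forall>x\<in>W. 0 \<le> \<mu>' x" using m assms(4) by (simp add: \<mu>'_def)
  ultimately show ?thesis unfolding finite_cone_def by (intro CollectI exI[of _ \<mu>']) auto
qed

lemma psiL_W:
  fixes L V W :: "(real^'n) set"
  assumes "finite W" "L = {v + w | v w. v \<in> convex hull V \<and> w \<in> finite_cone W}"
    and "f \<in> L" "w \<in> W" "0 \<in> interior (transl L f)"
  shows "gauge_fn (transl L f) w = 0"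
proof -
  obtain a c where ac: "f = a + c" "a \<in> convex hull V" "c \<in> finite_cone W" using assms(2,3) by auto
  have "gauge_fn (transl L f) w \<le> 0 + e" if e: "e > 0" for e
  proof -
    have "c + (1/e) *\<^sub>R w \<in> finite_cone W" using cone_add[OF assms(1) ac(3) assms(4)] e by simp
    hence "f + (1/e) *\<^sub>R w \<in> L" using ac assms(2) by (auto simp: add.assoc)
    hence "(1/e) *\<^sub>R w \<in> transl L f" unfolding transl_def by (intro image_eqI[of _ _ "f + (1/e) *\<^sub>R w"]) auto
    hence "w \<in> (\<lambda>x. e *\<^sub>R x) ` transl L f" using e by (intro image_eqI[of _ _ "(1/e) *\<^sub>R w"]) auto
    thus ?thesis using gauge_le[OF e] by simp
  qed
  hence "gauge_fn (transl L f) w \<le> 0" by (rule field_le_epsilon)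
  thus ?thesis using gauge_nonneg[OF assms(5)] by (meson antisym)
qed

lemma V_in_L:
  fixes L V W :: "(real^'n) set"
  assumes "L = {v + w | v w. v \<in> convex hull V \<and> w \<in> finite_cone W}" "v \<in> V"
  shows "v \<in> L"
proof -
  have "0 \<in> finite_cone W" unfolding finite_cone_def by (intro CollectI exI[of _ "\<lambda>_. 0"]) auto
  thus ?thesis using assms hull_inc[OF assms(2)] by force
qed

lemma psiL_V:
  fixes L :: "(real^'n) set"
  assumes "v \<in> L"
  shows "gauge_fn (transl L f) (v - f) \<le> 1"
  by (rule gauge_le) (use assms in \<open>auto simp: transl_def\<close>)



lemma psiC_le:
  fixes L V W C :: "(real^'n) set"
  assumes "finite V" "finite W" "L = {v + w | v w. v \<in> convex hull V \<and> w \<in> finite_cone W}"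
    and "convex C" "f \<in> interior C" "convex L" "f \<in> interior L" "a \<ge> 0"
    and "\<forall>v\<in>V. gauge_fn (transl C f) (v - f) \<le> a" "\<forall>w\<in>W. gauge_fn (transl C f) w \<le> 0"
  shows "gauge_fn (transl C f) r \<le> a * gauge_fn (transl L f) r"
proof -
  note C = transl_props[OF assms(4,5)]
  note L = transl_props[OF assms(6,7)]
  have "gauge_fn (transl C f) r \<le> a * gauge_fn (transl L f) r + e" if e: "e > 0" for e
  proof -
    define l where "l = gauge_fn (transl L f) r + e / (a + 1)"
    have l: "gauge_fn (transl L f) r < l" "l > 0"
      using e assms(8) gauge_nonneg[OF L(2), of r] by (auto simp: l_def add_nonneg_pos)
    obtain y where y: "y \<in> transl L f" "r = l *\<^sub>R y" using gauge_lt[OF L l(1)] by blast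
    obtain u where u: "u \<in> L" "y = u - f" using y(1) unfolding transl_def by blast
    obtain K where K: "K \<ge> 0" "\<forall>S a b. convex S \<and> 0 \<in> interior S \<and> (\<forall>v\<in>V. gauge_fn S (v - f) \<le> a)
      \<and> (\<forall>w\<in>W. gauge_fn S w \<le> b) \<and> b \<ge> 0 \<longrightarrow> gauge_fn S (u - f) \<le> a + b * K"
      using gauge_L_bound[OF assms(1,2,3) u(1), of f] by blast
    have gy: "gauge_fn (transl C f) y \<le> a" using K(2)[rule_format, of "transl C f" a 0] C assms(9,10) u(2) by simp
    have "gauge_fn (transl C f) r = l * gauge_fn (transl C f) y"
      unfolding y(2) by (rule gauge_scale[OF C]) (use l in simp)
    also have "\<dots> \<le> l * a" using gy l by (simp add: mult_left_mono)
    also have "\<dots> = a * gauge_fn (transl L f) r + a * (e / (a+1))" by (simp add: l_def algebra_simps)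
    also have "a * (e / (a+1)) \<le> e" using assms(8) e by (simp add: field_simps)
    finally show ?thesis by simp
  qed
  thus ?thesis by (rule field_le_epsilon)
qed

lemma valid_from_le:
  fixes C L :: "(real^'n) set"
  assumes "c > 0" "f \<in> interior L \<Longrightarrow> f \<in> interior C \<and>
      (\<forall>r. gauge_fn (transl C f) r \<le> c * gauge_fn (transl L f) r)"
  shows "CB C k R f \<subseteq> scale_set (1 / c) (CB L k R f)"
proof
  fix s assume s: "s \<in> CB C k R f"
  have sn: "s \<in> nonneg_orthant k" using s by (auto simp: CB_def split: if_splits)
  define s' where "s' = (\<lambda>j. c * s j)"
  have s'n: "s' \<in> nonneg_orthant k" using sn assms(1) by (auto simp: nonneg_orthant_def s'_def)
  have "s' \<in> CB L k R f"
  proof (cases "f \<in> interior L")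
    case False thus ?thesis using s'n by (simp add: CB_def)
  next
    case True
    with assms(2) have fC: "f \<in> interior C" and le: "\<forall>r. gauge_fn (transl C f) r \<le> c * gauge_fn (transl L f) r" by auto
    have "1 \<le> (\<Sum>j<k. s j * gauge_fn (transl C f) (R j))" using s fC by (simp add: CB_def)
    also have "\<dots> \<le> (\<Sum>j<k. s' j * gauge_fn (transl L f) (R j))"
    proof (intro sum_mono)
      fix j assume "j \<in> {..<k}"
      hence "0 \<le> s j" using sn by (auto simp: nonneg_orthant_def)
      hence "s j * gauge_fn (transl C f) (R j) \<le> s j * (c * gauge_fn (transl L f) (R j))"
        using le by (intro mult_left_mono) auto
      thus "s j * gauge_fn (transl C f) (R j) \<le> s' j * gauge_fn (transl L f) (R j)"
        by (simp add: s'_def algebra_simps)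
    qed
    finally show ?thesis using True s'n by (simp add: CB_def)
  qed
  moreover have "s = (\<lambda>j. (1 / c) * s' j)" using assms(1) by (simp add: s'_def)
  ultimately show "s \<in> scale_set (1 / c) (CB L k R f)" unfolding scale_set_def by blast
qed

lemma rho_f_le:
  fixes C L :: "(real^'n) set"
  assumes "c > 0" "\<And>k R. CB C k R f \<subseteq> scale_set (1 / c) (CB L k R f)"
  shows "rho_f f C L \<le> ereal c"
  unfolding rho_f_def by (rule Inf_lower) (use assms in auto)



lemma zero_int_transl:
  fixes B :: "(real^'n) set"
  assumes "f \<in> interior B"
  shows "0 \<in> interior (transl B f)"
  unfolding transl_def interior_translation_subtract
  using assms by (intro image_eqI[of _ _ f]) auto

lemma step1:
  fixes L V W :: "(real^'n) set" and \<B> :: "(real^'n) set set"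
  assumes "finite V" "V \<noteq> {}" "finite W" "L = {v + w | v w. v \<in> convex hull V \<and> w \<in> finite_cone W}"
    and "f \<in> interior L" "convex L" "\<alpha> > 0"
    and valid: "\<forall>k R. k \<ge> 1 \<longrightarrow> CBfam \<B> k R f \<subseteq> scale_set (1 / \<alpha>) (CB L k R f)"
    and "\<delta> > 0"
  shows "\<exists>B\<in>\<B>. f \<in> interior B \<and> (\<forall>v\<in>V. gauge_fn (transl B f) (v - f) \<le> real (card V + card W + 1) * \<alpha>)
     \<and> (\<forall>w\<in>W. gauge_fn (transl B f) w \<le> \<delta>)"
proof (rule ccontr)
  define m where "m = real (card V + card W + 1)"
  define p where "p = card V"
  define q where "q = card W"
  have m: "m > 0" "m = real p + real q + 1" by (auto simp: m_def p_def q_def)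
  assume "\<not> ?thesis"
  hence H: "\<And>B. B \<in> \<B> \<Longrightarrow> f \<in> interior B \<Longrightarrow>
     (\<exists>v\<in>V. gauge_fn (transl B f) (v - f) > m * \<alpha>) \<or> (\<exists>w\<in>W. gauge_fn (transl B f) w > \<delta>)"
    unfolding m_def by (auto simp: not_le)
  obtain ev where ev: "bij_betw ev {0..<p} V" using ex_bij_betw_nat_finite[OF assms(1)] p_def by blast
  obtain ew where ew: "bij_betw ew {0..<q} W" using ex_bij_betw_nat_finite[OF assms(3)] q_def by blast
  have p: "p \<ge> 1" using assms(1,2) p_def by (simp add: Suc_leI card_gt_0_iff)
  define k where "k = p + q"
  define R where "R = (\<lambda>j. if j < p then ev j - f else ew (j - p))"
  define s where "s = (\<lambda>j. if j < p then 1 / (m * \<alpha>) else if j < p + q then 1 / \<delta> else 0)"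
  have sn: "s \<in> nonneg_orthant k" using m assms(7,9) by (auto simp: s_def k_def nonneg_orthant_def)
  have s0: "0 \<le> s j" for j using m assms(7,9) by (auto simp: s_def)
  have "s \<in> CB B k R f" if B: "B \<in> \<B>" for B
  proof (cases "f \<in> interior B")
    case False thus ?thesis using sn by (simp add: CB_def)
  next
    case True
    have g0: "0 \<le> gauge_fn (transl B f) r" for r by (rule gauge_nonneg[OF zero_int_transl[OF True]])
    have t0: "0 \<le> s i * gauge_fn (transl B f) (R i)" for i using s0 g0 by simp
    have "\<exists>j<k. 1 < s j * gauge_fn (transl B f) (R j)"
    proof -
      from H[OF B True] show ?thesis
      proof
        assume "\<exists>v\<in>V. gauge_fn (transl B f) (v - f) > m * \<alpha>"
        then obtain v where v: "v \<in> V" "gauge_fn (transl B f) (v - f) > m * \<alpha>" by blast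
        obtain j where j: "j < p" "v = ev j" using ev v(1) by (auto simp: bij_betw_def)
        have ma: "m * \<alpha> > 0" using m assms(7) by simp
        have "1 < gauge_fn (transl B f) (v - f) / (m * \<alpha>)" using v(2) ma by (simp add: less_divide_eq)
        hence "1 < s j * gauge_fn (transl B f) (R j)" using j by (simp add: s_def R_def)
        thus ?thesis using j by (auto simp: k_def intro!: exI[of _ j])
      next
        assume "\<exists>w\<in>W. gauge_fn (transl B f) w > \<delta>"
        then obtain w where w: "w \<in> W" "gauge_fn (transl B f) w > \<delta>" by blast
        obtain j where j: "j < q" "w = ew j" using ew w(1) by (auto simp: bij_betw_def)
        have "1 < s (p + j) * gauge_fn (transl B f) (R (p + j))" using j w assms(9) by (simp add: s_def R_def field_simps)
        thus ?thesis using j by (auto simp: k_def intro!: exI[of _ "p + j"])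
      qed
    qed
    then obtain j where j: "j < k" "1 < s j * gauge_fn (transl B f) (R j)" by blast
    have "s j * gauge_fn (transl B f) (R j) \<le> (\<Sum>i<k. s i * gauge_fn (transl B f) (R i))"
      by (rule member_le_sum) (use j t0 in auto)
    thus ?thesis using j True sn by (simp add: CB_def)
  qed
  hence "s \<in> CBfam \<B> k R f" using sn by (simp add: CBfam_def)
  moreover have "k \<ge> 1" using p by (simp add: k_def)
  ultimately have "s \<in> scale_set (1 / \<alpha>) (CB L k R f)" using valid by blast
  then obtain s' where s': "s' \<in> CB L k R f" "s = (\<lambda>j. (1 / \<alpha>) * s' j)" unfolding scale_set_def by blast
  have s's: "s' j = \<alpha> * s j" for j using s'(2) assms(7) by (simp add: fun_eq_iff)
  have "1 \<le> (\<Sum>j<k. s' j * gauge_fn (transl L f) (R j))" using s'(1) assms(5) by (simp add: CB_def)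
  also have "\<dots> \<le> (\<Sum>j<k. if j < p then 1 / m else 0)"
  proof (intro sum_mono)
    fix j assume j: "j \<in> {..<k}"
    have fL: "f \<in> L" using assms(5) interior_subset by blast
    note Lt = transl_props[OF assms(6,5)]
    show "s' j * gauge_fn (transl L f) (R j) \<le> (if j < p then 1 / m else 0)"
    proof (cases "j < p")
      case True
      have "ev j \<in> V" using ev True by (auto simp: bij_betw_def)
      hence g: "gauge_fn (transl L f) (ev j - f) \<le> 1" using psiL_V V_in_L[OF assms(4)] by blast
      have "s' j * gauge_fn (transl L f) (R j) = (1 / m) * gauge_fn (transl L f) (ev j - f)"
        using True assms(7) m by (simp add: s's s_def R_def)
      also have "\<dots> \<le> 1 / m" using g m by (simp add: divide_right_mono)
      finally show ?thesis using True by simp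
    next
      case False
      hence "j - p < q" using j by (auto simp: k_def)
      hence "ew (j - p) \<in> W" using ew by (auto simp: bij_betw_def)
      hence "gauge_fn (transl L f) (R j) = 0" using False psiL_W[OF assms(3,4) fL _ Lt(2)] by (simp add: R_def)
      thus ?thesis using False by simp
    qed
  qed
  also have "\<dots> = real p / m"
  proof -
    have e: "{..<k} \<inter> {j. j < p} = {..<p}" by (auto simp: k_def)
    have "(\<Sum>j<k. if j < p then 1 / m else 0) = (\<Sum>j\<in>{..<k} \<inter> {j. j < p}. 1 / m)"
      by (subst sum.If_cases) auto
    thus ?thesis unfolding e by (simp add: divide_inverse)
  qed
  also have "\<dots> < 1" using m by (simp add: field_simps)
  finally show False by simp
qed



lemma gen_bound:
  fixes S :: "(real^'n) set"
  assumes "convex S" "0 \<in> interior S" "d > 0"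
    and K: "\<And>b. b \<in> Basis \<Longrightarrow> gauge_fn S (d *\<^sub>R b) \<le> K \<and> gauge_fn S (-(d *\<^sub>R b)) \<le> K"
  shows "gauge_fn S r \<le> (real DIM(real^'n) * K / d) * norm r"
proof -
  obtain b0 where b0: "b0 \<in> (Basis::(real^'n) set)" using nonempty_Basis by blast
  have K0: "K \<ge> 0" using K[OF b0] gauge_nonneg[OF assms(2), of "d *\<^sub>R b0"] by linarith
  have "gauge_fn S r = gauge_fn S (\<Sum>b\<in>Basis. 1 *\<^sub>R ((r \<bullet> b) *\<^sub>R b))"
    by (simp add: euclidean_representation)
  also have "\<dots> \<le> (\<Sum>b\<in>Basis. 1 * gauge_fn S ((r \<bullet> b) *\<^sub>R b))"
    by (rule gauge_sum[OF assms(1,2)]) auto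
  also have "\<dots> \<le> (\<Sum>b\<in>(Basis::(real^'n) set). norm r / d * K)"
  proof (intro sum_mono)
    fix b :: "real^'n" assume b: "b \<in> Basis"
    have "gauge_fn S ((r \<bullet> b) *\<^sub>R b) \<le> \<bar>r \<bullet> b\<bar> / d * K"
    proof (cases "r \<bullet> b \<ge> 0")
      case True
      have "(r \<bullet> b) *\<^sub>R b = ((r \<bullet> b) / d) *\<^sub>R (d *\<^sub>R b)" using assms(3) by simp
      hence "gauge_fn S ((r \<bullet> b) *\<^sub>R b) \<le> ((r \<bullet> b) / d) * gauge_fn S (d *\<^sub>R b)"
        using gauge_scale_le[OF assms(1,2), of "(r \<bullet> b) / d" "d *\<^sub>R b"] True assms(3) by simp
      also have "\<dots> \<le> ((r \<bullet> b) / d) * K" using K[OF b] True assms(3) by (intro mult_left_mono) auto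
      finally show ?thesis using True by simp
    next
      case False
      have "(r \<bullet> b) *\<^sub>R b = (-(r \<bullet> b) / d) *\<^sub>R (-(d *\<^sub>R b))" using assms(3) by simp
      hence "gauge_fn S ((r \<bullet> b) *\<^sub>R b) \<le> (-(r \<bullet> b) / d) * gauge_fn S (-(d *\<^sub>R b))"
      proof -
        assume eq: "(r \<bullet> b) *\<^sub>R b = (-(r \<bullet> b) / d) *\<^sub>R (-(d *\<^sub>R b))"
        have "0 \<le> -(r \<bullet> b) / d" using False assms(3) by (simp add: divide_nonpos_pos)
        from gauge_scale_le[OF assms(1,2) this, of "-(d *\<^sub>R b)"] show ?thesis
          unfolding eq .
      qed
      also have "\<dots> \<le> (-(r \<bullet> b) / d) * K" using K[OF b] False assms(3) by (intro mult_left_mono) (auto simp: divide_nonpos_pos)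
      finally show ?thesis using False by simp
    qed
    also have "\<dots> \<le> norm r / d * K"
      using Basis_le_norm[OF b, of r] assms(3) K0 by (intro mult_right_mono divide_right_mono) auto
    finally show "1 * gauge_fn S ((r \<bullet> b) *\<^sub>R b) \<le> norm r / d * K" by simp
  qed
  also have "\<dots> = (real DIM(real^'n) * K / d) * norm r" by simp
  finally show ?thesis .
qed

lemma limit_set:
  fixes \<phi> :: "real^'n \<Rightarrow> real" and f :: "real^'n"
  assumes nn: "\<And>x. 0 \<le> \<phi> x" and bd: "\<And>x. \<phi> x \<le> M * norm x" and M: "M > 0"
    and add: "\<And>x y. \<phi> (x + y) \<le> \<phi> x + \<phi> y"
    and sc: "\<And>c x. c \<ge> 0 \<Longrightarrow> \<phi> (c *\<^sub>R x) = c * \<phi> x"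
  defines "C \<equiv> {x. \<phi> (x - f) \<le> 1}"
  shows "C \<in> convex_bodies" "f \<in> interior C" "\<And>r. gauge_fn (transl C f) r = \<phi> r"
proof -
  have lip: "dist (\<phi> x) (\<phi> y) \<le> M * dist x y" for x y
  proof -
    have "\<phi> x \<le> \<phi> y + \<phi> (x - y)" using add[of y "x - y"] by simp
    moreover have "\<phi> y \<le> \<phi> x + \<phi> (y - x)" using add[of x "y - x"] by simp
    moreover have "\<phi> (x - y) \<le> M * dist x y" "\<phi> (y - x) \<le> M * dist x y"
      using bd[of "x - y"] bd[of "y - x"] by (auto simp: dist_norm norm_minus_commute)
    ultimately show ?thesis by (simp add: dist_real_def abs_le_iff)
  qed
  have cont: "continuous_on UNIV (\<lambda>x. \<phi> (x - f))"
  proof (rule lipschitz_on_continuous_on[of M])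
    show "lipschitz_on M UNIV (\<lambda>x. \<phi> (x - f))" unfolding lipschitz_on_def
      using lip[of "_ - f" "_ - f"] M by (simp add: dist_norm)
  qed
  have closedC: "closed C" unfolding C_def by (rule closed_Collect_le[OF cont]) simp
  have convC: "convex C"
  proof (rule convexI)
    fix x y and u v :: real assume xy: "x \<in> C" "y \<in> C" "0 \<le> u" "0 \<le> v" "u + v = 1"
    have "u *\<^sub>R x + v *\<^sub>R y - f = u *\<^sub>R (x - f) + v *\<^sub>R (y - f)"
      using xy(5) by (simp add: algebra_simps flip: scaleR_add_left)
    hence "\<phi> (u *\<^sub>R x + v *\<^sub>R y - f) \<le> \<phi> (u *\<^sub>R (x - f)) + \<phi> (v *\<^sub>R (y - f))"
      using add by simp
    also have "\<dots> = u * \<phi> (x - f) + v * \<phi> (y - f)" using sc xy(3,4) by simp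
    also have "\<dots> \<le> u * 1 + v * 1" using xy by (intro add_mono mult_left_mono) (auto simp: C_def)
    finally show "u *\<^sub>R x + v *\<^sub>R y \<in> C" using xy(5) by (simp add: C_def)
  qed
  have ball: "ball f (1 / M) \<subseteq> C"
  proof
    fix x assume "x \<in> ball f (1 / M)"
    hence "norm (x - f) < 1 / M" by (simp add: dist_norm norm_minus_commute)
    hence "M * norm (x - f) < 1" using M by (simp add: field_simps)
    thus "x \<in> C" using bd[of "x - f"] by (simp add: C_def)
  qed
  show fC: "f \<in> interior C" using ball M mem_interior by (metis divide_pos_pos zero_less_one)
  have "aff_dim C = int DIM(real^'n)" using fC aff_dim_nonempty_interior by blast
  thus "C \<in> convex_bodies" using closedC convC by (simp add: convex_bodies_def)
  fix r
  have tC: "transl C f = {r. \<phi> r \<le> 1}" unfolding transl_def C_def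
    by (auto intro: image_eqI[of _ _ "_ + f"])
  have set: "{l. l > 0 \<and> r \<in> (\<lambda>x. l *\<^sub>R x) ` transl C f} = {l. l > 0 \<and> \<phi> r \<le> l}"
  proof (intro set_eqI iffI)
    fix l assume "l \<in> {l. l > 0 \<and> r \<in> (\<lambda>x. l *\<^sub>R x) ` transl C f}"
    then obtain y where y: "l > 0" "\<phi> y \<le> 1" "r = l *\<^sub>R y" using tC by auto
    have "\<phi> r = l * \<phi> y" using sc y by simp
    also have "\<dots> \<le> l" using y by (simp add: mult_left_le)
    finally show "l \<in> {l. l > 0 \<and> \<phi> r \<le> l}" using y by simp
  next
    fix l assume l: "l \<in> {l. l > 0 \<and> \<phi> r \<le> l}"
    have "\<phi> ((1/l) *\<^sub>R r) = \<phi> r / l" using sc[of "1/l" r] l by simp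
    hence "\<phi> ((1/l) *\<^sub>R r) \<le> 1" using l by simp
    moreover have "r = l *\<^sub>R ((1/l) *\<^sub>R r)" using l by simp
    ultimately show "l \<in> {l. l > 0 \<and> r \<in> (\<lambda>x. l *\<^sub>R x) ` transl C f}" using l tC by blast
  qed
  show "gauge_fn (transl C f) r = \<phi> r"
  proof (cases "\<phi> r = 0")
    case True
    have "{l. l > 0 \<and> \<phi> r \<le> l} = {0<..}" using True by auto
    thus ?thesis unfolding gauge_fn_def set using True by simp
  next
    case False
    hence "{l. l > 0 \<and> \<phi> r \<le> l} = {\<phi> r..}" using nn[of r] by auto
    thus ?thesis unfolding gauge_fn_def set by simp
  qed
qed



lemma step2:
  fixes L V W :: "(real^'n) set" and B :: "nat \<Rightarrow> (real^'n) set"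
  assumes "finite V" "finite W" "L = {v + w | v w. v \<in> convex hull V \<and> w \<in> finite_cone W}"
    and fL: "f \<in> interior L" and a: "a \<ge> 0"
    and Bc: "\<And>t. convex (B t) \<and> f \<in> interior (B t)"
    and Bv: "\<And>t v. v \<in> V \<Longrightarrow> gauge_fn (transl (B t) f) (v - f) \<le> a"
    and Bw: "\<And>t w. w \<in> W \<Longrightarrow> gauge_fn (transl (B t) f) w \<le> inverse (real (Suc t))"
  shows "\<exists>C \<sigma>. strict_mono \<sigma> \<and> C \<in> convex_bodies \<and> f \<in> interior C \<and>
     (\<forall>r. (\<lambda>t. gauge_fn (transl (B (\<sigma> t)) f) r) \<longlonglongrightarrow> gauge_fn (transl C f) r) \<and>
     (\<forall>v\<in>V. gauge_fn (transl C f) (v - f) \<le> a) \<and> (\<forall>w\<in>W. gauge_fn (transl C f) w \<le> 0)"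
proof -
  define g where "g t r = gauge_fn (transl (B t) f) r" for t r
  have St: "convex (transl (B t) f)" "0 \<in> interior (transl (B t) f)" for t
    using transl_props[of "B t" f] Bc[of t] by auto
  obtain e where e: "e > 0" "ball f e \<subseteq> L" using fL mem_interior by blast
  define d where "d = e / 2"
  have d: "d > 0" "d < e" using e by (auto simp: d_def)
  define U where "U = (\<lambda>b. f + d *\<^sub>R b) ` Basis \<union> (\<lambda>b. f - d *\<^sub>R b) ` (Basis :: (real^'n) set)"
  have finU: "finite U" by (simp add: U_def)
  have UL: "U \<subseteq> L"
  proof
    fix u assume "u \<in> U"
    then obtain b :: "real^'n" where b: "b \<in> Basis" "u = f + d *\<^sub>R b \<or> u = f - d *\<^sub>R b" by (auto simp: U_def)
    have "dist f u = d" using b d by (auto simp: dist_norm)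
    thus "u \<in> L" using e d by auto
  qed
  have "\<forall>u\<in>U. \<exists>Ku\<ge>0. \<forall>t. g t (u - f) \<le> a + Ku"
  proof
    fix u assume "u \<in> U"
    then obtain K where K: "K \<ge> 0" "\<forall>S a b. convex S \<and> 0 \<in> interior S \<and> (\<forall>v\<in>V. gauge_fn S (v - f) \<le> a)
      \<and> (\<forall>w\<in>W. gauge_fn S w \<le> b) \<and> b \<ge> 0 \<longrightarrow> gauge_fn S (u - f) \<le> a + b * K"
      using gauge_L_bound[OF assms(1,2,3), of u f] UL by blast
    have "g t (u - f) \<le> a + 1 * K" for t
    proof -
      have "\<forall>w\<in>W. gauge_fn (transl (B t) f) w \<le> 1"
      proof
        fix w assume "w \<in> W"
        have "inverse (real (Suc t)) \<le> 1" by (simp add: inverse_le_1_iff)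
        thus "gauge_fn (transl (B t) f) w \<le> 1" using Bw[OF \<open>w \<in> W\<close>, of t] by linarith
      qed
      thus ?thesis using K(2)[rule_format, of "transl (B t) f" a 1] St[of t] Bv[of _ t] by (simp add: g_def)
    qed
    thus "\<exists>Ku\<ge>0. \<forall>t. g t (u - f) \<le> a + Ku" using K(1) by auto
  qed
  then obtain Kf where Kf: "\<And>u. u \<in> U \<Longrightarrow> Kf u \<ge> 0 \<and> (\<forall>t. g t (u - f) \<le> a + Kf u)" by metis
  define K where "K = a + (\<Sum>u\<in>U. Kf u)"
  have UK: "g t (u - f) \<le> K" if "u \<in> U" for u t
  proof -
    have "Kf u \<le> (\<Sum>u\<in>U. Kf u)" by (rule member_le_sum) (use that finU Kf in auto)
    thus ?thesis using Kf[OF that] by (simp add: K_def) (meson add_left_mono order_trans)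
  qed
  have Kb: "g t (d *\<^sub>R b) \<le> K \<and> g t (-(d *\<^sub>R b)) \<le> K" if "b \<in> Basis" for t b
    using UK[of "f + d *\<^sub>R b" t] UK[of "f - d *\<^sub>R b" t] that by (auto simp: U_def)
  define M where "M = real DIM(real^'n) * K / d + 1"
  have K0: "K \<ge> 0"
  proof -
    obtain b0 where b0: "b0 \<in> (Basis::(real^'n) set)" using nonempty_Basis by blast
    show ?thesis using Kb[OF b0, of 0] gauge_nonneg[OF St(2)] unfolding g_def by (meson order_trans)
  qed
  have M: "M > 0" using K0 d by (simp add: M_def add_nonneg_pos)
  have bd: "g t r \<le> M * norm r" for t r
  proof -
    have "g t r \<le> (real DIM(real^'n) * K / d) * norm r"
      unfolding g_def by (rule gen_bound[OF St d(1)]) (use Kb in \<open>auto simp: g_def\<close>)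
    also have "\<dots> \<le> M * norm r" by (simp add: M_def distrib_right)
    finally show ?thesis .
  qed
  have g0: "0 \<le> g t r" for t r unfolding g_def by (rule gauge_nonneg[OF St(2)])
  have lip: "\<bar>g t x - g t y\<bar> \<le> M * norm (x - y)" for t x y
  proof -
    have "g t x \<le> g t y + g t (x - y)" using gauge_add[OF St[of t], of y "x - y"] by (simp add: g_def)
    moreover have "g t y \<le> g t x + g t (y - x)" using gauge_add[OF St[of t], of x "y - x"] by (simp add: g_def)
    moreover have "g t (y - x) \<le> M * norm (x - y)" using bd[of t "y - x"] by (simp add: norm_minus_commute)
    ultimately show ?thesis using bd[of t "x - y"] by (simp add: abs_le_iff)
  qed
  obtain D :: "(real^'n) set" where D: "countable D" "\<And>X. open X \<Longrightarrow> X \<noteq> {} \<Longrightarrow> \<exists>d\<in>D. d \<in> X"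
    by (rule countable_dense_setE) blast
  define h where "h n x = g n x / (1 + norm x)" for n x
  have hb: "norm (h n x) \<le> M" if "x \<in> D" for n x
  proof -
    have "g n x \<le> M * (1 + norm x)" using bd[of n x] M by (smt (verit) mult_left_mono norm_ge_zero)
    thus ?thesis using g0[of n x] by (simp add: h_def divide_le_eq add_pos_nonneg)
  qed
  obtain \<sigma> where \<sigma>: "strict_mono \<sigma>" "\<And>x. x \<in> D \<Longrightarrow> \<exists>l. (\<lambda>n. h (\<sigma> n) x) \<longlonglongrightarrow> l"
    using function_convergent_subsequence[OF D(1), of h M] hb by blast
  have convD: "Cauchy (\<lambda>n. g (\<sigma> n) x)" if xD: "x \<in> D" for x
  proof -
    obtain l where "(\<lambda>n. h (\<sigma> n) x) \<longlonglongrightarrow> l" using \<sigma>(2)[OF xD] by blast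
    hence "(\<lambda>n. (1 + norm x) * h (\<sigma> n) x) \<longlonglongrightarrow> (1 + norm x) * l" by (intro tendsto_mult_left)
    moreover have "(1 + norm x) * h (\<sigma> n) x = g (\<sigma> n) x" for n
    proof -
      have "1 + norm x \<noteq> 0" using norm_ge_zero[of x] by linarith
      thus ?thesis by (simp add: h_def)
    qed
    ultimately have "convergent (\<lambda>n. g (\<sigma> n) x)" by (auto simp: convergent_def)
    thus ?thesis by (rule convergent_Cauchy)
  qed
  have cauchy: "Cauchy (\<lambda>n. g (\<sigma> n) x)" for x
  proof (rule CauchyI)
    fix \<epsilon> :: real assume \<epsilon>: "\<epsilon> > 0"
    obtain y where y: "y \<in> D" "y \<in> ball x (\<epsilon> / (3 * M))" using D(2)[of "ball x (\<epsilon> / (3 * M))"] \<epsilon> M by (auto simp: not_le)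
    obtain N where N: "\<forall>m\<ge>N. \<forall>n\<ge>N. norm (g (\<sigma> m) y - g (\<sigma> n) y) < \<epsilon> / 3"
      using CauchyD[OF convD[OF y(1)], of "\<epsilon> / 3"] \<epsilon> by auto
    have xy: "M * norm (x - y) < \<epsilon> / 3" using y(2) M by (simp add: dist_norm field_simps)
    show "\<exists>N. \<forall>m\<ge>N. \<forall>n\<ge>N. norm (g (\<sigma> m) x - g (\<sigma> n) x) < \<epsilon>"
    proof (intro exI allI impI)
      fix m n assume mn: "N \<le> m" "N \<le> n"
      have "\<bar>g (\<sigma> m) y - g (\<sigma> n) y\<bar> < \<epsilon> / 3" using N mn by auto
      moreover have "\<bar>g (\<sigma> m) x - g (\<sigma> m) y\<bar> \<le> M * norm (x - y)" by (rule lip)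
      moreover have "\<bar>g (\<sigma> n) x - g (\<sigma> n) y\<bar> \<le> M * norm (x - y)" by (rule lip)
      ultimately show "norm (g (\<sigma> m) x - g (\<sigma> n) x) < \<epsilon>" using xy unfolding real_norm_def by linarith
    qed
  qed
  define \<phi> where "\<phi> x = lim (\<lambda>n. g (\<sigma> n) x)" for x
  have lim: "(\<lambda>n. g (\<sigma> n) x) \<longlonglongrightarrow> \<phi> x" for x
    using cauchy[of x] unfolding \<phi>_def Cauchy_convergent_iff convergent_LIMSEQ_iff .
  have \<phi>nn: "0 \<le> \<phi> x" for x
    by (rule LIMSEQ_le[OF tendsto_const lim]) (use g0 in auto)
  have \<phi>bd: "\<phi> x \<le> M * norm x" for x
    by (rule LIMSEQ_le[OF lim tendsto_const]) (use bd in auto)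
  have \<phi>add: "\<phi> (x + y) \<le> \<phi> x + \<phi> y" for x y
    by (rule LIMSEQ_le[OF lim tendsto_add[OF lim lim]])
       (use gauge_add[OF St] in \<open>auto simp: g_def\<close>)
  have \<phi>sc: "\<phi> (c *\<^sub>R x) = c * \<phi> x" if c: "c \<ge> 0" for c x
  proof -
    have "(\<lambda>n. g (\<sigma> n) (c *\<^sub>R x)) = (\<lambda>n. c * g (\<sigma> n) x)"
      using gauge_scale[OF St c] by (simp add: g_def)
    hence "(\<lambda>n. g (\<sigma> n) (c *\<^sub>R x)) \<longlonglongrightarrow> c * \<phi> x" using tendsto_mult_left[OF lim] by simp
    thus ?thesis using lim LIMSEQ_unique by blast
  qed
  define C where "C = {x. \<phi> (x - f) \<le> 1}"
  note LS = limit_set[of \<phi> M, OF \<phi>nn \<phi>bd M \<phi>add \<phi>sc, of f, folded C_def]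
  show ?thesis
  proof (intro exI[of _ C] exI[of _ \<sigma>] conjI allI ballI)
    show "strict_mono \<sigma>" by (rule \<sigma>(1))
    show "C \<in> convex_bodies" "f \<in> interior C" using LS by auto
    show "(\<lambda>t. gauge_fn (transl (B (\<sigma> t)) f) r) \<longlonglongrightarrow> gauge_fn (transl C f) r" for r
      using lim[of r] LS(3) by (simp add: g_def)
    show "gauge_fn (transl C f) (v - f) \<le> a" if "v \<in> V" for v
    proof -
      have "\<phi> (v - f) \<le> a" by (rule LIMSEQ_le[OF lim tendsto_const]) (use Bv that in \<open>auto simp: g_def\<close>)
      thus ?thesis using LS(3) by simp
    qed
    show "gauge_fn (transl C f) w \<le> 0" if "w \<in> W" for w
    proof -
      have "g (\<sigma> n) w \<le> inverse (real (Suc n))" for n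
      proof -
        have "n \<le> \<sigma> n" by (rule seq_suble[OF \<sigma>(1)])
        hence i: "inverse (real (Suc (\<sigma> n))) \<le> inverse (real (Suc n))"
          by (intro le_imp_inverse_le) auto
        show ?thesis using order_trans[OF Bw[OF that, of "\<sigma> n"] i] by (simp add: g_def)
      qed
      hence "\<phi> w \<le> 0" by (intro LIMSEQ_le[OF lim LIMSEQ_inverse_real_of_nat]) auto
      thus ?thesis using LS(3) by simp
    qed
  qed
qed



lemma final_step:
  fixes L :: "(real^'n) set" and \<B> :: "(real^'n) set set"
  assumes m: "m > 0"
    and H: "\<And>\<alpha>. \<alpha> > 0 \<Longrightarrow> (\<forall>k R. k \<ge> 1 \<longrightarrow> CBfam \<B> k R f \<subseteq> scale_set (1 / \<alpha>) (CB L k R f))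
       \<Longrightarrow> \<exists>B\<in>\<B>. rho_f f B L \<le> ereal (m * \<alpha>)"
  shows "ereal (1 / m) * (INF B\<in>\<B>. rho_f f B L) \<le> rho_f_fam f \<B> L"
  unfolding rho_f_fam_def
proof (rule Inf_greatest)
  fix x assume "x \<in> {ereal \<alpha> |\<alpha>. 0 < \<alpha> \<and> (\<forall>k R. 1 \<le> k \<longrightarrow> CBfam \<B> k R f \<subseteq> scale_set (1 / \<alpha>) (CB L k R f))}"
  then obtain \<alpha> where a: "x = ereal \<alpha>" "\<alpha> > 0" "\<forall>k R. 1 \<le> k \<longrightarrow> CBfam \<B> k R f \<subseteq> scale_set (1 / \<alpha>) (CB L k R f)"
    by blast
  obtain B where B: "B \<in> \<B>" "rho_f f B L \<le> ereal (m * \<alpha>)" using H[OF a(2)] a(3) by blast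
  have "(INF B\<in>\<B>. rho_f f B L) \<le> ereal (m * \<alpha>)" using B by (meson INF_lower2)
  hence "ereal (1 / m) * (INF B\<in>\<B>. rho_f f B L) \<le> ereal (1 / m) * ereal (m * \<alpha>)"
    by (rule ereal_mult_left_mono) (use m in simp)
  also have "\<dots> = x" using m a(1) by simp
  finally show "ereal (1 / m) * (INF B\<in>\<B>. rho_f f B L) \<le> x" .
qed

lemma exists_C:
  fixes \<B> :: "(real^'n) set set" and L :: "(real^'n) set" and V W :: "(real^'n) set"
  assumes B: "\<B> \<subseteq> convex_bodies"
    and fcl: "f_closed f \<B>"
    and L: "L \<in> convex_bodies"
    and "finite V" and "V \<noteq> {}"
    and "finite W"
    and hL: "L = {v + w | v w. v \<in> convex hull V \<and> w \<in> finite_cone W}"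
    and fL: "f \<in> interior L"
    and a: "\<alpha> > 0" and valid: "\<forall>k R. k \<ge> 1 \<longrightarrow> CBfam \<B> k R f \<subseteq> scale_set (1 / \<alpha>) (CB L k R f)"
  shows "\<exists>C\<in>\<B>. rho_f f C L \<le> ereal (real (card V + card W + 1) * \<alpha>)"
proof -
  define m where "m = real (card V + card W + 1)"
  have m: "m > 0" by (simp add: m_def)
  have cL: "convex L" using L by (simp add: convex_bodies_def)
  have "\<forall>t. \<exists>B. B \<in> \<B> \<and> f \<in> interior B \<and> (\<forall>v\<in>V. gauge_fn (transl B f) (v - f) \<le> m * \<alpha>)
     \<and> (\<forall>w\<in>W. gauge_fn (transl B f) w \<le> inverse (real (Suc t)))"
    using step1[OF assms(4,5,6) hL fL cL a valid] unfolding m_def by (metis inverse_positive_iff_positive of_nat_0_less_iff zero_less_Suc)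
  then obtain Bs where Bs: "\<And>t. Bs t \<in> \<B> \<and> f \<in> interior (Bs t) \<and> (\<forall>v\<in>V. gauge_fn (transl (Bs t) f) (v - f) \<le> m * \<alpha>)
     \<and> (\<forall>w\<in>W. gauge_fn (transl (Bs t) f) w \<le> inverse (real (Suc t)))" by metis
  have Bc: "convex (Bs t) \<and> f \<in> interior (Bs t)" for t using Bs[of t] B by (auto simp: convex_bodies_def)
  obtain C \<sigma> where C: "strict_mono \<sigma>" "C \<in> convex_bodies" "f \<in> interior C"
     "\<forall>r. (\<lambda>t. gauge_fn (transl (Bs (\<sigma> t)) f) r) \<longlonglongrightarrow> gauge_fn (transl C f) r"
     "\<forall>v\<in>V. gauge_fn (transl C f) (v - f) \<le> m * \<alpha>" "\<forall>w\<in>W. gauge_fn (transl C f) w \<le> 0"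
  proof -
    have "m * \<alpha> \<ge> 0" using m a by simp
    from step2[of V W L f "m * \<alpha>" Bs, OF assms(4,6) hL fL this Bc] Bs
    show ?thesis using that by blast
  qed
  have CB: "C \<in> \<B>"
    using fcl[unfolded f_closed_def, rule_format, of "\<lambda>t. Bs (\<sigma> t)" C] Bs C by auto
  have cC: "convex C" using C(2) by (simp add: convex_bodies_def)
  have le: "\<forall>r. gauge_fn (transl C f) r \<le> (m * \<alpha>) * gauge_fn (transl L f) r"
    using psiC_le[OF assms(4,6) hL cC C(3) cL fL _ C(5) C(6)] m a by simp
  have "rho_f f C L \<le> ereal (m * \<alpha>)"
    by (rule rho_f_le) (use m a in simp, rule valid_from_le, use m a C(3) le in auto)
  thus ?thesis using CB by (auto simp: m_def)
qed



lemma exists_nonint_interior: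
  fixes L :: "(real^'n) set"
  assumes "L \<in> convex_bodies"
  shows "\<exists>f. f \<in> interior L \<and> f \<notin> int_points"
proof -
  have cL: "convex L" and aL: "aff_dim L = int DIM(real^'n)" using assms by (auto simp: convex_bodies_def)
  have "L \<noteq> {}" using aL by auto
  hence "rel_interior L \<noteq> {}" using rel_interior_eq_empty[OF cL] by simp
  hence "interior L \<noteq> {}" using interior_rel_interior_gen[of L] aL by simp
  then obtain x where x: "x \<in> interior L" by blast
  obtain e where e: "e > 0" "ball x e \<subseteq> interior L" using open_contains_ball_eq[OF open_interior] x by blast
  show ?thesis
  proof (cases "x \<in> int_points")
    case False thus ?thesis using x by blast
  next
    case True
    define t where "t = min (e/2) (1/2)"
    have t: "0 < t" "t < 1" "t < e" using e by (auto simp: t_def)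
    define i :: 'n where "i = undefined"
    define y where "y = x + t *\<^sub>R axis i 1"
    have "dist x y = t" using t by (simp add: y_def dist_norm)
    hence yL: "y \<in> interior L" using e t by auto
    have "y \<notin> int_points"
    proof
      assume "y \<in> int_points"
      hence "y $ i \<in> \<int>" by (simp add: int_points_def)
      moreover have "x $ i \<in> \<int>" using True by (simp add: int_points_def)
      ultimately have "y $ i - x $ i \<in> \<int>" by (rule Ints_diff)
      moreover have "y $ i - x $ i = t" by (simp add: y_def axis_def)
      ultimately have "t \<in> \<int>" by simp
      then obtain k where "t = of_int k" by (auto elim: Ints_cases)
      thus False using t by auto
    qed
    thus ?thesis using yL by blast
  qed
qed

lemma rho_f_fam_empty:
  fixes L :: "(real^'n) set"
  assumes "f \<in> interior L"
  shows "rho_f_fam f {} L = \<infinity>"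
proof -
  have "{ereal \<alpha> | \<alpha>. \<alpha> > 0 \<and> (\<forall>k R. k \<ge> 1 \<longrightarrow> CBfam {} k R f \<subseteq> scale_set (1 / \<alpha>) (CB L k R f))} = {}"
  proof (rule ccontr)
    assume "\<not> ?thesis"
    then obtain \<alpha> where a: "\<alpha> > 0" "\<forall>k R. k \<ge> 1 \<longrightarrow> CBfam {} k R f \<subseteq> scale_set (1 / \<alpha>) (CB L k R f)" by blast
    have "(\<lambda>j. 0) \<in> CBfam {} 1 (\<lambda>j. 0) f" by (simp add: CBfam_def nonneg_orthant_def)
    hence "(\<lambda>j. 0) \<in> scale_set (1 / \<alpha>) (CB L 1 (\<lambda>j. 0) f)" using a(2) by blast
    then obtain s' where s': "s' \<in> CB L 1 (\<lambda>j. 0) f" "(\<lambda>j. 0::real) = (\<lambda>j. (1 / \<alpha>) * s' j)"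
      unfolding scale_set_def by blast
    have "s' 0 = 0" using s'(2) a(1) by (metis divide_eq_0_iff mult_eq_0_iff one_neq_zero order_less_irrefl)
    thus False using s'(1) assms by (simp add: CB_def)
  qed
  note E = this
  show ?thesis unfolding rho_f_fam_def E by (simp add: top_ereal_def)
qed

lemma rho_f_nonneg: "0 \<le> rho_f f B L"
  unfolding rho_f_def by (rule Inf_greatest) auto

theorem corollary4p3:
  fixes \<B> :: "(real^'n) set set" and L :: "(real^'n) set"
    and V W :: "(real^'n) set"
  assumes "\<B> \<subseteq> convex_bodies"
    and "\<And>f. f \<notin> int_points \<Longrightarrow> f_closed f \<B>"
    and "L \<in> convex_bodies"
    and "finite V" and "V \<noteq> {}"
    and "finite W" and "0 \<notin> W"
    and "L = {v + w | v w. v \<in> convex hull V \<and> w \<in> finite_cone W}"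
  shows "ereal (1 / real (card V + card W + 1)) *
           (SUP f \<in> - int_points. (INF B \<in> \<B>. rho_f f B L)) \<le> rho_fam \<B> L
         \<and> rho_fam \<B> L \<le> (SUP f \<in> - int_points. (INF B \<in> \<B>. rho_f f B L))"
proof
  define m where "m = real (card V + card W + 1)"
  have m: "m > 0" by (simp add: m_def)
  obtain f0 where f0: "f0 \<in> interior L" "f0 \<notin> int_points" using exists_nonint_interior[OF assms(3)] by blast
  show "ereal (1 / real (card V + card W + 1)) *
           (SUP f \<in> - int_points. (INF B \<in> \<B>. rho_f f B L)) \<le> rho_fam \<B> L"
  proof (cases "\<B> = {}")
    case True
    have "rho_fam \<B> L = \<infinity>"
      unfolding rho_fam_def True using rho_f_fam_empty[OF f0(1)] f0(2)
      by (metis ComplI SUP_upper top.extremum_unique top_ereal_def)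
    thus ?thesis by simp
  next
    case False
    have pw: "ereal (1 / m) * (INF B\<in>\<B>. rho_f f B L) \<le> rho_f_fam f \<B> L" if f: "f \<notin> int_points" for f :: "real^'n"
    proof (rule final_step[OF m])
      fix \<alpha> :: real assume a: "\<alpha> > 0" and valid: "\<forall>k R. k \<ge> 1 \<longrightarrow> CBfam \<B> k R f \<subseteq> scale_set (1 / \<alpha>) (CB L k R f)"
      show "\<exists>B\<in>\<B>. rho_f f B L \<le> ereal (m * \<alpha>)"
      proof (cases "f \<in> interior L")
        case True
        show ?thesis using exists_C[OF assms(1) assms(2)[OF f] assms(3,4,5,6,8) True a valid] by (simp add: m_def)
      next
        case fL: False
        obtain B0 where "B0 \<in> \<B>" using False by blast
        moreover have "rho_f f B0 L \<le> ereal (m * \<alpha>)"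
          by (rule rho_f_le) (use m a in simp, rule valid_from_le, use m a fL in auto)
        ultimately show ?thesis by blast
      qed
    qed
    have "ereal (1 / m) * (SUP f \<in> - int_points. (INF B \<in> \<B>. rho_f f B L))
        = (SUP f \<in> - int_points. ereal (1 / m) * (INF B \<in> \<B>. rho_f f B L))"
      by (rule SUP_ereal_mult_left[symmetric]) (use f0 m rho_f_nonneg in \<open>auto intro: INF_greatest\<close>)
    also have "\<dots> \<le> rho_fam \<B> L" unfolding rho_fam_def
      by (rule SUP_mono) (use pw in auto)
    finally show ?thesis by (simp add: m_def)
  qed
next
  show "rho_fam \<B> L \<le> (SUP f \<in> - int_points. (INF B \<in> \<B>. rho_f f B L))"
    unfolding rho_fam_def
  proof (rule SUP_mono)
    fix f :: "real^'n" assume "f \<in> - int_points"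
    have "rho_f_fam f \<B> L \<le> (INF B \<in> \<B>. rho_f f B L)"
    proof (rule INF_greatest)
      fix B assume B: "B \<in> \<B>"
      have "CBfam \<B> k R f \<subseteq> CB B k R f" for k R using B by (auto simp: CBfam_def)
      thus "rho_f_fam f \<B> L \<le> rho_f f B L"
        unfolding rho_f_fam_def rho_f_def by (intro Inf_superset_mono) blast
    qed
    thus "\<exists>m\<in>- int_points. rho_f_fam f \<B> L \<le> (INF B \<in> \<B>. rho_f m B L)" using \<open>f \<in> - int_points\<close> by blast
  qed
qed

end
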